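(* $z_2(4,3)=8$.
   Context: Double Zarankiewicz number: consider configurations $G=([m],[n],E_1\cup E_2)$ where $[m]=\{1,\dots,m\}$, $E_1\subseteq[m]\times[n]$ is a set of 1-edges (cells) and $E_2$ is a set of 2-edges $(i,j;k,l)$ with $i,k\in[m]$, $j,l\in[n]$, $i\ne k$, $j\ne l$; the cells $(i,j)$ and $(k,l)$ are the two halves of this 2-edge. Simplicity condition: the halves of all 2-edges are pairwise distinct cells and none of them belongs to $E_1$. A cell is occupied if it lies in $E_1$ or is a half of some 2-edge. $G$ contains a generalized $C_4$-cycle if (1) there are four 1-edges $(i,j),(i,l),(k,j),(k,l)\in E_1$ with $i\ne k$, $j\ne l$; or (2) there is a 2-edge $(i,j;k,l)\in E_2$ whose two opposite cells $(i,l)$ and $(k,j)$ are both occupied; or (3) there are a 2-edge $(i,j;p,q)\in E_2$ and a cell $(k,l)$ such that the five cells $(k,l),(k,j),(k,q),(i,l),(p,l)$ are pairwise distinct and all occupied. $z_2(m,n)$ is the maximum of $|E_1|+|E_2|$ over all such $G$ satisfying the simplicity condition and containing no generalized $C_4$-cycle. *)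

theory Defs
  imports Main
begin

type_synonym cell = "nat \<times> nat"
type_synonym twoedge = "cell \<times> cell"

definition grid :: "nat \<Rightarrow> nat \<Rightarrow> cell set" where
  "grid m n = {1..m} \<times> {1..n}"

text \<open>A 2-edge (i,j;k,l) is represented as the pair ((i,j),(k,l)).\<close>
definition is_twoedge :: "nat \<Rightarrow> nat \<Rightarrow> twoedge \<Rightarrow> bool" where
  "is_twoedge m n e = (fst e \<in> grid m n \<and> snd e \<in> grid m n \<and>
      fst (fst e) \<noteq> fst (snd e) \<and> snd (fst e) \<noteq> snd (snd e))"

definition halves :: "twoedge \<Rightarrow> cell set" where
  "halves e = {fst e, snd e}"

definition is_config :: "nat \<Rightarrow> nat \<Rightarrow> cell set \<Rightarrow> twoedge set \<Rightarrow> bool" where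
  "is_config m n E1 E2 = (E1 \<subseteq> grid m n \<and> (\<forall>e\<in>E2. is_twoedge m n e))"

definition simple_config :: "cell set \<Rightarrow> twoedge set \<Rightarrow> bool" where
  "simple_config E1 E2 =
     ((\<forall>e\<in>E2. \<forall>e'\<in>E2. e \<noteq> e' \<longrightarrow> halves e \<inter> halves e' = {}) \<and>
      (\<forall>e\<in>E2. halves e \<inter> E1 = {}))"

definition occupied :: "cell set \<Rightarrow> twoedge set \<Rightarrow> cell \<Rightarrow> bool" where
  "occupied E1 E2 c = (c \<in> E1 \<or> (\<exists>e\<in>E2. c \<in> halves e))"

definition has_gen_C4 :: "cell set \<Rightarrow> twoedge set \<Rightarrow> bool" where
  "has_gen_C4 E1 E2 =
    ((\<exists>i j k l. i \<noteq> k \<and> j \<noteq> l \<and> (i,j) \<in> E1 \<and> (i,l) \<in> E1 \<and> (k,j) \<in> E1 \<and> (k,l) \<in> E1) \<or>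
     (\<exists>i j k l. ((i,j),(k,l)) \<in> E2 \<and> occupied E1 E2 (i,l) \<and> occupied E1 E2 (k,j)) \<or>
     (\<exists>i j p q k l. ((i,j),(p,q)) \<in> E2 \<and>
        distinct [(k,l),(k,j),(k,q),(i,l),(p,l)] \<and>
        (\<forall>c\<in>{(k,l),(k,j),(k,q),(i,l),(p,l)}. occupied E1 E2 c)))"

definition z2 :: "nat \<Rightarrow> nat \<Rightarrow> nat" where
  "z2 m n = Max {card E1 + card E2 | E1 E2.
      is_config m n E1 E2 \<and> simple_config E1 E2 \<and> \<not> has_gen_C4 E1 E2}"

end

theory Submission
  imports Defs
begin
lemma i4: "{1..4::nat} = {1,2,3,4}" by auto
lemma i3: "{1..3::nat} = {1,2,3}" by auto
lemma grid43: "grid 4 3 = {(1,1),(1,2),(1,3),(2,1),(2,2),(2,3),(3,1),(3,2),(3,3),(4,1),(4,2),(4,3)}"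
  unfolding grid_def i4 i3 by auto
lemma card_ind: "E \<subseteq> G \<Longrightarrow> finite G \<Longrightarrow> card E = (\<Sum>c\<in>G. if c \<in> E then 1 else 0)"
  by (simp add: sum.If_cases Int_absorb1 Int_commute Int_absorb2)


lemma row_bound: "of_bool x + of_bool y + of_bool z \<le> (1::nat) + of_bool (x \<and> y) + of_bool (x \<and> z) + of_bool (y \<and> z)"
  by (cases x; cases y; cases z) auto

lemma pair_bound: "\<not>(p \<and> q) \<Longrightarrow> \<not>(p \<and> r) \<Longrightarrow> \<not>(p \<and> s) \<Longrightarrow> \<not>(q \<and> r) \<Longrightarrow> \<not>(q \<and> s) \<Longrightarrow> \<not>(r \<and> s) \<Longrightarrow>
   of_bool p + of_bool q + of_bool r + of_bool s \<le> (1::nat)"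
  by (cases p; cases q; cases r; cases s) auto

lemma c4free_card:
  fixes E1 :: "cell set"
  assumes "E1 \<subseteq> grid 4 3"
    and "\<not>(\<exists>i j k l. i\<noteq>k \<and> j\<noteq>l \<and> (i,j)\<in>E1 \<and> (i,l)\<in>E1 \<and> (k,j)\<in>E1 \<and> (k,l)\<in>E1)"
  shows "card E1 \<le> 7"
proof -
  have H: "\<And>i j k l. i\<noteq>k \<Longrightarrow> j\<noteq>l \<Longrightarrow> (i,j)\<in>E1 \<Longrightarrow> (i,l)\<in>E1 \<Longrightarrow> (k,j)\<in>E1 \<Longrightarrow> (k,l)\<in>E1 \<Longrightarrow> False"
    using assms(2) by blast
  define x where "x = (\<lambda>i j. of_bool ((i,j) \<in> E1) :: nat)"
  define y where "y = (\<lambda>i j l. of_bool ((i,j) \<in> E1 \<and> (i,l) \<in> E1) :: nat)"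
  have "card E1 = (\<Sum>c\<in>grid 4 3. if c \<in> E1 then 1 else 0)"
    using assms(1) by (intro card_ind) (auto simp: grid_def)
  also have "\<dots> = x 1 1 + x 1 2 + x 1 3 + x 2 1 + x 2 2 + x 2 3 + x 3 1 + x 3 2 + x 3 3 + x 4 1 + x 4 2 + x 4 3"
    unfolding grid43 x_def by simp
  also have "\<dots> \<le> 7"
  proof -
    have r: "x i 1 + x i 2 + x i 3 \<le> 1 + y i 1 2 + y i 1 3 + y i 2 3" for i
      unfolding x_def y_def by (rule row_bound)
    have p: "y 1 j l + y 2 j l + y 3 j l + y 4 j l \<le> 1" if "j \<noteq> l" for j l
      unfolding y_def
      apply (rule pair_bound)
      using H[of 1 2 j l] H[of 1 3 j l] H[of 1 4 j l] H[of 2 3 j l] H[of 2 4 j l] H[of 3 4 j l] that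
      by auto
    show ?thesis using r[of 1] r[of 2] r[of 3] r[of 4] p[of 1 2] p[of 1 3] p[of 2 3] by simp
  qed
  finally show ?thesis .
qed

lemma witness:
  defines "E1 \<equiv> {(1,2),(1,3),(2,1),(2,3),(3,1),(3,2),(4,1)} :: cell set"
    and "E2 \<equiv> {((3,3),(4,2))} :: twoedge set"
  shows "is_config 4 3 E1 E2" "simple_config E1 E2" "\<not> has_gen_C4 E1 E2" "card E1 + card E2 = 8"
proof -
  show "is_config 4 3 E1 E2" unfolding is_config_def is_twoedge_def grid43 E1_def E2_def by simp
  show "simple_config E1 E2" unfolding simple_config_def halves_def E1_def E2_def by simp
  show "card E1 + card E2 = 8" unfolding E1_def E2_def by simp
  have occ: "occupied E1 E2 c \<longleftrightarrow> c \<in> {(1,2),(1,3),(2,1),(2,3),(3,1),(3,2),(4,1),(3,3),(4,2)}" for c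
    unfolding occupied_def E1_def E2_def halves_def by auto
  have tri: "(i,j,l) \<in> {(1,2,3),(1,3,2),(2,1,3),(2,3,1),(3,1,2),(3,2,1)}"
    if "(i,j)\<in>E1" "(i,l)\<in>E1" "j\<noteq>l" for i j l
    using that unfolding E1_def by auto
  have n1: "\<not>(\<exists>i j k l. i \<noteq> k \<and> j \<noteq> l \<and> (i,j) \<in> E1 \<and> (i,l) \<in> E1 \<and> (k,j) \<in> E1 \<and> (k,l) \<in> E1)"
  proof clarify
    fix i j k l assume "i \<noteq> k" "j \<noteq> l" "(i,j) \<in> E1" "(i,l) \<in> E1" "(k,j) \<in> E1" "(k,l) \<in> E1"
    then have "(i,j,l) \<in> {(1,2,3),(1,3,2),(2,1,3),(2,3,1),(3,1,2),(3,2,1)}"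
      "(k,j,l) \<in> {(1,2,3),(1,3,2),(2,1,3),(2,3,1),(3,1,2),(3,2,1)}" "i \<noteq> k"
      using tri by blast+
    then show False by auto
  qed
  have n2: "\<not>(\<exists>i j k l. ((i,j),(k,l)) \<in> E2 \<and> occupied E1 E2 (i,l) \<and> occupied E1 E2 (k,j))"
  proof clarify
    fix i j k l assume e: "((i,j),(k,l)) \<in> E2" and o: "occupied E1 E2 (i,l)" "occupied E1 E2 (k,j)"
    from e have "k = 4" "j = 3" unfolding E2_def by auto
    with o(2) show False unfolding occ by simp
  qed
  have n3: "\<not>(\<exists>i j p q k l. ((i,j),(p,q)) \<in> E2 \<and>
        distinct [(k,l),(k,j),(k,q),(i,l),(p,l)] \<and>
        (\<forall>c\<in>{(k,l),(k,j),(k,q),(i,l),(p,l)}. occupied E1 E2 c))"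
  proof clarify
    fix i j p q k l
    assume e: "((i,j),(p,q)) \<in> E2" and d: "distinct [(k,l),(k,j),(k,q),(i,l),(p,l)]"
      and o: "\<forall>c\<in>{(k,l),(k,j),(k,q),(i,l),(p,l)}. occupied E1 E2 c"
    from e have ij: "i = 3" "j = 3" "p = 4" "q = 2" unfolding E2_def by auto
    from o have o1: "occupied E1 E2 (k,3)" "occupied E1 E2 (k,2)" "occupied E1 E2 (k,l)"
       "occupied E1 E2 (3,l)" "occupied E1 E2 (4,l)" using ij by auto
    from o1(1,2) have k: "k = 1 \<or> k = 3" unfolding occ by auto
    from d ij have "l \<noteq> 3" "l \<noteq> 2" by auto
    with o1(4) have l: "l = 1" unfolding occ by auto
    show False using k l o1(3) d ij unfolding occ by auto
  qed
  show "\<not> has_gen_C4 E1 E2"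
    unfolding has_gen_C4_def using n1 n2 n3 by blast
qed

lemma upper:
  assumes cfg: "is_config 4 3 E1 E2" and sc: "simple_config E1 E2" and nc: "\<not> has_gen_C4 E1 E2"
  shows "card E1 + card E2 \<le> 8"
proof -
  define G where "G = grid 4 3"
  define H where "H = (\<Union>e\<in>E2. halves e)"
  have finG: "finite G" and cardG: "card G = 12" unfolding G_def grid43 by simp_all
  have E1G: "E1 \<subseteq> G" using cfg unfolding is_config_def G_def by blast
  have tw: "\<And>e. e \<in> E2 \<Longrightarrow> is_twoedge 4 3 e" using cfg unfolding is_config_def by blast
  have E2G: "E2 \<subseteq> G \<times> G" using tw unfolding is_twoedge_def G_def by fastforce
  have finE2: "finite E2" using E2G finG by (meson finite_SigmaI finite_subset)
  have disj: "\<And>e e'. e \<in> E2 \<Longrightarrow> e' \<in> E2 \<Longrightarrow> e \<noteq> e' \<Longrightarrow> halves e \<inter> halves e' = {}"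
    using sc unfolding simple_config_def by blast
  have disj1: "E1 \<inter> H = {}" using sc unfolding simple_config_def H_def by blast
  have ch: "card (halves e) = 2" if "e \<in> E2" for e
    using tw[OF that] unfolding is_twoedge_def halves_def by (cases e) auto
  have cardH: "card H = 2 * card E2"
  proof -
    have "card H = (\<Sum>e\<in>E2. card (halves e))"
      unfolding H_def by (rule card_UN_disjoint) (use finE2 disj in \<open>auto simp: halves_def\<close>)
    also have "\<dots> = (\<Sum>e\<in>E2. 2)" using ch by simp
    finally show ?thesis by simp
  qed
  have HG: "H \<subseteq> G" using tw unfolding H_def halves_def is_twoedge_def G_def by auto
  have finH: "finite H" using HG finG finite_subset by blast
  have finE1: "finite E1" using E1G finG finite_subset by blast
  have cU: "card (E1 \<union> H) = card E1 + 2 * card E2"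
    using card_Un_disjoint[OF finE1 finH disj1] cardH by simp
  have UG: "E1 \<union> H \<subseteq> G" using E1G HG by blast
  have occ: "occupied E1 E2 c \<longleftrightarrow> c \<in> E1 \<union> H" for c
    unfolding occupied_def H_def by blast
  have n1: "\<not>(\<exists>i j k l. i\<noteq>k \<and> j\<noteq>l \<and> (i,j)\<in>E1 \<and> (i,l)\<in>E1 \<and> (k,j)\<in>E1 \<and> (k,l)\<in>E1)"
    using nc unfolding has_gen_C4_def by blast
  have n2: "\<And>i j k l. ((i,j),(k,l)) \<in> E2 \<Longrightarrow> (i,l) \<in> E1 \<union> H \<Longrightarrow> (k,j) \<in> E1 \<union> H \<Longrightarrow> False"
    using nc unfolding has_gen_C4_def occ by blast
  have e1: "card E1 \<le> 7" using c4free_card[OF E1G[unfolded G_def] n1] .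
  have le12: "card E1 + 2 * card E2 \<le> 12"
    using card_mono[OF finG UG] cU cardG by simp
  have le11: "card E1 + 2 * card E2 \<le> 11" if ne: "E2 \<noteq> {}"
  proof -
    obtain i j k l where e: "((i,j),(k,l)) \<in> E2" using ne by (metis all_not_in_conv surj_pair)
    have "(i,l) \<in> G" "(k,j) \<in> G" using tw[OF e] unfolding is_twoedge_def G_def grid_def by auto
    with n2[OF e] have "E1 \<union> H \<noteq> G" by blast
    then have "E1 \<union> H \<subset> G" using UG by blast
    then have "card (E1 \<union> H) < card G" using finG psubset_card_mono by blast
    then show ?thesis using cU cardG by simp
  qed
  have not27: False if c2: "card E2 = 2" and c7: "card E1 = 7"
  proof -
    have "card (G - (E1 \<union> H)) = 1"
      using card_Diff_subset[OF finite_subset[OF UG finG] UG] cU cardG c2 c7 by simp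
    then obtain u where u: "G - (E1 \<union> H) = {u}" using card_1_singletonE by blast
    obtain a b where ab: "u = (a,b)" by (cases u)
    have allocc: "c \<in> E1 \<union> H" if "c \<in> G" "c \<noteq> (a,b)" for c
      using u ab that by blast
    have shape: "\<exists>c r. c \<noteq> b \<and> r \<noteq> a \<and> halves e = {(a,c),(r,b)}" if e: "e \<in> E2" for e
    proof -
      obtain i j k l where el: "e = ((i,j),(k,l))" by (cases e) auto
      have t: "i \<noteq> k" "j \<noteq> l" "(i,l) \<in> G" "(k,j) \<in> G"
        using tw[OF e] unfolding el is_twoedge_def G_def grid_def by auto
      have "(i,l) = (a,b) \<or> (k,j) = (a,b)"
        using n2[OF e[unfolded el]] allocc t(3,4) by blast
      then show ?thesis
      proof
        assume "(i,l) = (a,b)"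
        then show ?thesis using t unfolding el halves_def by auto
      next
        assume "(k,j) = (a,b)"
        then show ?thesis using t unfolding el halves_def by auto
      qed
    qed
    obtain A B where AB: "E2 = {A,B}" "A \<noteq> B" using c2 card_2_iff by metis
    obtain c1 r1 where A: "c1 \<noteq> b" "r1 \<noteq> a" "halves A = {(a,c1),(r1,b)}" using shape AB by blast
    obtain c2 r2 where B: "c2 \<noteq> b" "r2 \<noteq> a" "halves B = {(a,c2),(r2,b)}" using shape AB by blast
    have "halves A \<inter> halves B = {}" using disj AB by blast
    then have cr: "c1 \<noteq> c2" "r1 \<noteq> r2" using A B by auto
    have HAB: "H = {(a,c1),(r1,b),(a,c2),(r2,b)}" unfolding H_def AB using A B by auto
    have inG: "(r,c) \<in> G" if "r \<in> {r1,r2}" "c \<in> {c1,c2}" for r c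
    proof -
      have "(a,c1) \<in> G" "(r1,b) \<in> G" "(a,c2) \<in> G" "(r2,b) \<in> G" using HG HAB by auto
      then show ?thesis using that unfolding G_def grid_def by auto
    qed
    have inE1: "(r,c) \<in> E1" if "r \<in> {r1,r2}" "c \<in> {c1,c2}" for r c
    proof -
      have "(r,c) \<in> E1 \<union> H" using allocc inG that A B by blast
      moreover have "(r,c) \<notin> H" unfolding HAB using that A B by auto
      ultimately show ?thesis by blast
    qed
    show False using n1 inE1 cr by blast
  qed
  show ?thesis
  proof (cases "card E2 \<le> 1")
    case True then show ?thesis using e1 by linarith
  next
    case False
    then have "E2 \<noteq> {}" by auto
    then have "card E1 + 2 * card E2 \<le> 11" by (rule le11)
    moreover have "\<not> (card E2 = 2 \<and> card E1 = 7)" using not27 by blast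
    ultimately show ?thesis using False by linarith
  qed
qed

theorem theorem2p4:
  shows "z2 4 3 = 8"
proof -
  define S where "S = {card E1 + card E2 | E1 E2.
      is_config 4 3 E1 E2 \<and> simple_config E1 E2 \<and> \<not> has_gen_C4 E1 E2}"
  have le: "x \<le> 8" if "x \<in> S" for x using that upper unfolding S_def by blast
  have mem: "8 \<in> S" unfolding S_def using witness by (smt (verit) mem_Collect_eq)
  have fin: "finite S" using le by (meson finite_atMost atMost_iff finite_subset subsetI)
  have "Max S = 8" using fin mem le by (intro Max_eqI) auto
  then show ?thesis unfolding z2_def S_def .
qed
end
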